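(* Let $q \in C^1(\mathbb{R}^n,\mathbb{R})$ be a scalar function such that there exists $m$ with $q(\mathbf{x}) = f(x_m)\cdot \mathbf{x}_{i\neq m}^{\beta}$ for a multi-index $\beta\in\mathbb{N}_0^{n-1}$ and $f$ any function of $x_m$ that can be integrated. Set $\lambda = \left\lceil \frac{|\beta|-1}{2}\right\rceil$ and $W(\mathbf{x}) = \mathcal{A}_{x_m}^{2\lambda+2} q(\mathbf{x}) = \mathbf{x}_{i\neq m}^{\beta}\, \mathcal{A}_{x_m}^{2\lambda+2} f(x_m)$. Then $$Q(\mathbf{x}) := \sum_{p=0}^{\lambda} (-1)^p\, \partial_{x_m}^{2\lambda-2p}\, \Delta_{\setminus m}^{p} W(\mathbf{x}) = \sum_{p=0}^{\lambda} (-1)^p\, \mathcal{A}_{x_m}^{2+2p}\, \Delta_{\setminus m}^{p} q(\mathbf{x})$$ satisfies $\Delta Q = q$, where $\Delta=\sum_{i=1}^n\partial_{x_i}^2$.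
   Context: $\mathbf{x}_{i\neq m}^{\beta}$ denotes $\prod_{i\neq m} x_i^{\beta_i}$ and $|\beta|$ its total degree; $\lceil h\rceil$ is the least integer $\ge h$. The incomplete Laplacian is $\Delta_{\setminus m} f := \sum_{i\neq m}\partial_{x_i}^2 f$, with $\Delta_{\setminus m}^p$ its $p$-fold application. The antiderivative is $\mathcal{A}_{x_j} f(\mathbf{x}) := \int_{x_0}^{x_j} f(x_1,\dots,\xi_j,\dots,x_n)\,d\xi_j$ with freely chosen lower limit $x_0$, and $\mathcal{A}_{x_j}^p := \mathcal{A}_{x_j}^{p-1}\mathcal{A}_{x_j}$ (repeated integration). Zeroth powers of these operators are the identity. *)

theory Defs
  imports "HOL-Analysis.Analysis"
begin

definition vupd :: "real ^ 'n \<Rightarrow> 'n \<Rightarrow> real \<Rightarrow> real ^ 'n" where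
  "vupd x j t = (\<chi> k. if k = j then t else x $ k)"

definition pderiv_at :: "'n \<Rightarrow> (real ^ 'n \<Rightarrow> real) \<Rightarrow> real ^ 'n \<Rightarrow> real" where
  "pderiv_at j g x = deriv (\<lambda>t. g (vupd x j t)) (x $ j)"

definition oint :: "real \<Rightarrow> real \<Rightarrow> (real \<Rightarrow> real) \<Rightarrow> real" where
  "oint a b h = (if a \<le> b then integral {a..b} h else - integral {b..a} h)"

definition antider :: "real \<Rightarrow> 'n \<Rightarrow> (real ^ 'n \<Rightarrow> real) \<Rightarrow> real ^ 'n \<Rightarrow> real" where
  "antider x0 j g x = oint x0 (x $ j) (\<lambda>\<xi>. g (vupd x j \<xi>))"

definition lap_minus :: "'n::finite \<Rightarrow> (real ^ 'n \<Rightarrow> real) \<Rightarrow> real ^ 'n \<Rightarrow> real" where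
  "lap_minus m g x = (\<Sum>i\<in>UNIV - {m}. pderiv_at i (pderiv_at i g) x)"

definition laplacian :: "(real ^ 'n::finite \<Rightarrow> real) \<Rightarrow> real ^ 'n \<Rightarrow> real" where
  "laplacian g x = (\<Sum>i\<in>UNIV. pderiv_at i (pderiv_at i g) x)"

end

theory Submission
  imports Defs
begin

lemma vupd_nth[simp]: "vupd x i t $ j = (if j = i then t else x $ j)"
  by (simp add: vupd_def)
lemma vupd_vupd[simp]: "vupd (vupd x i t) i s = vupd x i s"
  by (simp add: vupd_def vec_eq_iff)
lemma vupd_same[simp]: "vupd x i (x $ i) = x"
  by (simp add: vupd_def vec_eq_iff)

lemma pderiv_eqI:
  assumes "\<And>x t. ((\<lambda>s. g (vupd x i s)) has_real_derivative h (vupd x i t)) (at t)"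
  shows "pderiv_at i g = h"
proof
  fix x show "pderiv_at i g x = h x"
    using DERIV_imp_deriv[OF assms[of x "x$i"]] by (simp add: pderiv_at_def)
qed

definition mnm :: "'n::finite \<Rightarrow> ('n \<Rightarrow> nat) \<Rightarrow> real^'n \<Rightarrow> real" where
  "mnm m \<alpha> x = (\<Prod>j\<in>UNIV - {m}. (x $ j) ^ \<alpha> j)"

definition deg :: "'n::finite \<Rightarrow> ('n \<Rightarrow> nat) \<Rightarrow> nat" where
  "deg m \<alpha> = (\<Sum>j\<in>UNIV - {m}. \<alpha> j)"

inductive cls :: "'n::finite \<Rightarrow> nat \<Rightarrow> (real^'n \<Rightarrow> real) \<Rightarrow> bool" for m where
  cls0: "cls m d (\<lambda>x. 0)"
| clsM: "deg m \<alpha> \<le> d \<Longrightarrow> cls m d (\<lambda>x. c * mnm m \<alpha> x)"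
| clsA: "cls m d P \<Longrightarrow> cls m d Q \<Longrightarrow> cls m d (\<lambda>x. P x + Q x)"

lemma cls_sum: "finite S \<Longrightarrow> (\<And>p. p \<in> S \<Longrightarrow> cls m d (F p)) \<Longrightarrow> cls m d (\<lambda>x. \<Sum>p\<in>S. F p x)"
proof (induction S rule: finite_induct)
  case empty then show ?case by (simp add: cls0)
next
  case (insert a S)
  then show ?case using clsA[of m d "F a" "\<lambda>x. \<Sum>p\<in>S. F p x"] by simp
qed

lemma mnm_indep[simp]: "mnm m \<alpha> (vupd x m t) = mnm m \<alpha> x"
  unfolding mnm_def by (auto intro!: prod.cong)

lemma cls_indep: "cls m d P \<Longrightarrow> P (vupd x m t) = P x"
  by (induction rule: cls.induct) auto

lemma mnm_split: "i \<noteq> m \<Longrightarrow> mnm m \<alpha> (vupd x i s) = s ^ \<alpha> i * (\<Prod>j\<in>UNIV-{m}-{i}. (x$j)^\<alpha> j)"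
  unfolding mnm_def by (subst prod.remove[of _ i]) (auto intro!: prod.cong)

lemma mnm_deriv:
  assumes "i \<noteq> m"
  shows "((\<lambda>s. mnm m \<alpha> (vupd x i s)) has_real_derivative
           (real (\<alpha> i) * mnm m (\<alpha>(i := \<alpha> i - 1)) (vupd x i t))) (at t)"
proof -
  let ?R = "\<Prod>j\<in>UNIV-{m}-{i}. (x$j)^\<alpha> j"
  have R: "(\<Prod>j\<in>UNIV-{m}-{i}. (x$j)^((\<alpha>(i := \<alpha> i - 1)) j)) = ?R"
    by (auto intro!: prod.cong)
  have "((\<lambda>s. s ^ \<alpha> i * ?R) has_real_derivative (real (\<alpha> i) * t ^ (\<alpha> i - 1)) * ?R) (at t)"
    by (intro DERIV_cmult_right) (simp add: DERIV_pow)
  then show ?thesis using assms by (simp add: mnm_split R mult.assoc)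
qed

lemma deg_dec: "i \<noteq> m \<Longrightarrow> deg m (\<alpha>(i := \<alpha> i - 1)) = deg m \<alpha> - 1 \<or> \<alpha> i = 0"
proof -
  assume i: "i \<noteq> m"
  have a: "deg m \<beta> = \<beta> i + (\<Sum>j\<in>UNIV-{m}-{i}. \<beta> j)" for \<beta>
    unfolding deg_def using i by (subst sum.remove[of _ i]) auto
  have "(\<Sum>j\<in>UNIV-{m}-{i}. (\<alpha>(i := \<alpha> i - 1)) j) = (\<Sum>j\<in>UNIV-{m}-{i}. \<alpha> j)"
    by (auto intro!: sum.cong)
  then show ?thesis using a[of \<alpha>] a[of "\<alpha>(i := \<alpha> i - 1)"] by auto
qed

lemma deg0: "deg m \<alpha> = 0 \<Longrightarrow> i \<noteq> m \<Longrightarrow> \<alpha> i = 0"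
  unfolding deg_def by auto

lemma cls_deriv_ex:
  "cls m d P \<Longrightarrow> \<exists>P'. cls m (d - 1) P' \<and> (d = 0 \<longrightarrow> P' = (\<lambda>x. 0)) \<and>
     (\<forall>x t. ((\<lambda>s. P (vupd x i s)) has_real_derivative P' (vupd x i t)) (at t))"
proof (induction rule: cls.induct)
  case (cls0 d)
  then show ?case by (intro exI[of _ "\<lambda>x. 0"]) (auto intro: cls.intros)
next
  case (clsM \<alpha> d c)
  show ?case
  proof (cases "i = m \<or> \<alpha> i = 0")
    case True
    have "\<And>x t. ((\<lambda>s. c * mnm m \<alpha> (vupd x i s)) has_real_derivative 0) (at t)"
    proof -
      fix x t
      have "(\<lambda>s. c * mnm m \<alpha> (vupd x i s)) = (\<lambda>s. c * mnm m \<alpha> (vupd x i (x$i)))"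
        using True by (cases "i = m") (auto simp: mnm_split simp del: vupd_same)
      then show "((\<lambda>s. c * mnm m \<alpha> (vupd x i s)) has_real_derivative 0) (at t)" by simp
    qed
    then show ?thesis by (intro exI[of _ "\<lambda>x. 0"]) (auto intro: cls.intros)
  next
    case False
    then have i: "i \<noteq> m" and ai: "\<alpha> i \<noteq> 0" by auto
    have d: "deg m (\<alpha>(i := \<alpha> i - 1)) \<le> d - 1" using deg_dec[OF i, of \<alpha>] ai clsM by auto
    have d0: "d \<noteq> 0" using clsM deg0[of m \<alpha> i] i ai by (metis le_zero_eq)
    show ?thesis
      apply (intro exI[of _ "\<lambda>x. (c * real (\<alpha> i)) * mnm m (\<alpha>(i := \<alpha> i - 1)) x"])
      using d d0 cls.clsM[OF d, of "c * real (\<alpha> i)"] DERIV_cmult[OF mnm_deriv[OF i], where c=c]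
      by (auto simp: mult.assoc)
  qed
next
  case (clsA d P Q)
  then obtain P' Q' where P': "cls m (d - 1) P'" "d = 0 \<longrightarrow> P' = (\<lambda>x. 0)"
      "\<forall>x t. ((\<lambda>s. P (vupd x i s)) has_real_derivative P' (vupd x i t)) (at t)"
    and Q': "cls m (d - 1) Q'" "d = 0 \<longrightarrow> Q' = (\<lambda>x. 0)"
      "\<forall>x t. ((\<lambda>s. Q (vupd x i s)) has_real_derivative Q' (vupd x i t)) (at t)" by blast
  show ?case
    apply (intro exI[of _ "\<lambda>x. P' x + Q' x"])
    using P' Q' by (auto intro!: cls.intros DERIV_add)
qed

lemma cls_pd:
  assumes "cls m d P"
  shows "cls m (d - 1) (pderiv_at i P)" "d = 0 \<Longrightarrow> pderiv_at i P = (\<lambda>x. 0)"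
    "((\<lambda>s. P (vupd x i s)) has_real_derivative pderiv_at i P (vupd x i t)) (at t)"
proof -
  obtain P' where P': "cls m (d - 1) P'" "d = 0 \<longrightarrow> P' = (\<lambda>x. 0)"
      "\<forall>x t. ((\<lambda>s. P (vupd x i s)) has_real_derivative P' (vupd x i t)) (at t)"
    using cls_deriv_ex[OF assms, of i] by blast
  have e: "pderiv_at i P = P'" by (rule pderiv_eqI) (use P' in blast)
  show "cls m (d - 1) (pderiv_at i P)" "d = 0 \<Longrightarrow> pderiv_at i P = (\<lambda>x. 0)"
    "((\<lambda>s. P (vupd x i s)) has_real_derivative pderiv_at i P (vupd x i t)) (at t)"
    using P' e by auto
qed

lemma lap_eq: "lap_minus m P = (\<lambda>x. \<Sum>i\<in>UNIV - {m}. pderiv_at i (pderiv_at i P) x)"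
  by (rule ext) (simp add: lap_minus_def)

lemma cls_lap:
  assumes "cls m d P"
  shows "cls m (d - 2) (lap_minus m P)" "d < 2 \<Longrightarrow> lap_minus m P = (\<lambda>x. 0)"
proof -
  have "cls m (d - 1 - 1) (pderiv_at i (pderiv_at i P))" for i
    using cls_pd(1)[OF cls_pd(1)[OF assms]] .
  then show "cls m (d - 2) (lap_minus m P)" unfolding lap_eq
    by (intro cls_sum) (auto simp: diff_diff_left numeral_2_eq_2)
  assume "d < 2"
  then have "pderiv_at i (pderiv_at i P) = (\<lambda>x. 0)" for i
    using cls_pd(2)[OF cls_pd(1)[OF assms]] by simp
  then show "lap_minus m P = (\<lambda>x. 0)" unfolding lap_eq by simp
qed

lemma cls_lap_pow:
  "cls m d P \<Longrightarrow> cls m (d - 2*p) ((lap_minus m ^^ p) P) \<and> (d < 2*p \<longrightarrow> (lap_minus m ^^ p) P = (\<lambda>x. 0))"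
proof (induction p)
  case 0
  then show ?case by simp
next
  case (Suc p)
  then have c: "cls m (d - 2*p) ((lap_minus m ^^ p) P)"
    and z: "d < 2*p \<Longrightarrow> (lap_minus m ^^ p) P = (\<lambda>x. 0)" by auto
  have 1: "cls m (d - 2 * Suc p) ((lap_minus m ^^ Suc p) P)"
    using cls_lap(1)[OF c] by (simp add: diff_diff_left)
  have "lap_minus m ((lap_minus m ^^ p) P) = (\<lambda>x. 0)" if "d < 2 * Suc p"
  proof (cases "d < 2*p")
    case True
    then show ?thesis using z cls_lap(2)[OF cls0[of m 0]] by simp
  next
    case False
    then show ?thesis using that cls_lap(2)[OF c] by simp
  qed
  then show ?case using 1 by simp
qed


definition sep :: "'n \<Rightarrow> (real^'n \<Rightarrow> real) \<Rightarrow> (real \<Rightarrow> real) \<Rightarrow> real^'n \<Rightarrow> real" where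
  "sep m P F x = P x * F (x $ m)"

definition Aop :: "real \<Rightarrow> (real \<Rightarrow> real) \<Rightarrow> real \<Rightarrow> real" where
  "Aop x0 F t = oint x0 t F"

lemma oint_cmul: "oint a b (\<lambda>s. c * F s) = c * oint a b F"
  using integral_cmul[of "{a..b}" c F] integral_cmul[of "{b..a}" c F]
  by (simp add: oint_def)

lemma antider_sep: "cls m d P \<Longrightarrow> antider x0 m (sep m P F) = sep m P (Aop x0 F)"
  by (rule ext) (simp add: antider_def sep_def Aop_def cls_indep oint_cmul)

lemma antider_pow_sep: "cls m d P \<Longrightarrow> (antider x0 m ^^ k) (sep m P F) = sep m P ((Aop x0 ^^ k) F)"
  by (induction k) (simp_all add: antider_sep)

lemma pd_other_sep:
  assumes "cls m d P" "i \<noteq> m"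
  shows "pderiv_at i (sep m P F) = sep m (pderiv_at i P) F"
proof (rule pderiv_eqI)
  fix x t
  show "((\<lambda>s. sep m P F (vupd x i s)) has_real_derivative sep m (pderiv_at i P) F (vupd x i t)) (at t)"
    using DERIV_cmult_right[OF cls_pd(3)[OF assms(1), where i=i and x=x and t=t], where c="F (x$m)"] assms(2)
    by (simp add: sep_def)
qed

lemma lap_sep: "cls m d P \<Longrightarrow> lap_minus m (sep m P F) = sep m (lap_minus m P) F"
proof -
  assume c: "cls m d P"
  have "pderiv_at i (pderiv_at i (sep m P F)) = sep m (pderiv_at i (pderiv_at i P)) F" if "i \<noteq> m" for i
    using pd_other_sep[OF c that] pd_other_sep[OF cls_pd(1)[OF c] that] by simp
  then show ?thesis unfolding lap_eq
    by (intro ext) (simp add: sep_def sum_distrib_right)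
qed

lemma lap_pow_sep: "cls m d P \<Longrightarrow> (lap_minus m ^^ p) (sep m P F) = sep m ((lap_minus m ^^ p) P) F"
proof (induction p)
  case 0 then show ?case by simp
next
  case (Suc p)
  then show ?case using lap_sep[OF conjunct1[OF cls_lap_pow[OF Suc.prems, of p]]] by simp
qed

lemma pd_m_sep:
  assumes "cls m d P" "\<And>t. (F has_real_derivative F' t) (at t)"
  shows "pderiv_at m (sep m P F) = sep m P F'"
proof (rule pderiv_eqI)
  fix x t
  show "((\<lambda>s. sep m P F (vupd x m s)) has_real_derivative sep m P F' (vupd x m t)) (at t)"
    using DERIV_cmult[OF assms(2)[of t], where c="P x"]
    by (simp add: sep_def cls_indep[OF assms(1)])
qed

lemma oint_deriv:
  assumes g: "continuous_on UNIV g"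
  shows "((\<lambda>t. oint x0 t g) has_real_derivative g t) (at t)"
proof -
  define a where "a = min x0 t - 1"
  define b where "b = max x0 t + 1"
  have int: "g integrable_on {u..v}" for u v
    by (rule integrable_continuous_interval) (rule continuous_on_subset[OF g], auto)
  have ax: "a \<le> x0" by (simp add: a_def)
  have eq: "integral {a..s} g - integral {a..x0} g = oint x0 s g" if "s \<in> {a<..<b}" for s
  proof (cases "x0 \<le> s")
    case True
    then show ?thesis using Henstock_Kurzweil_Integration.integral_combine[where a=a and c=x0 and b=s and f=g] that int[of a s] ax
      by (auto simp: oint_def algebra_simps)
  next
    case False
    then show ?thesis using Henstock_Kurzweil_Integration.integral_combine[where a=a and c=s and b=x0 and f=g] that int[of a x0] ax
      by (auto simp: oint_def algebra_simps)
  qed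
  have tI: "t \<in> {a<..<b}" unfolding a_def b_def greaterThanLessThan_iff using min.cobounded2[of x0 t] max.cobounded2[of t x0] by linarith
  have "((\<lambda>s. integral {a..s} g) has_real_derivative g t) (at t within {a..b})"
    by (rule integral_has_real_derivative) (use tI in \<open>auto intro: continuous_on_subset[OF g]\<close>)
  then have "((\<lambda>s. integral {a..s} g) has_real_derivative g t) (at t)"
    using at_within_interior[of t "{a..b}"] tI by simp
  then have "((\<lambda>s. integral {a..s} g - integral {a..x0} g) has_real_derivative g t - 0) (at t)"
    by (rule DERIV_diff) simp
  then show ?thesis
    using has_field_derivative_transform_within_open[where S="{a<..<b}" and
       f="\<lambda>s. integral {a..s} g - integral {a..x0} g" and g="\<lambda>s. oint x0 s g" and a=t and f'="g t"] eq
    using tI by (metis diff_zero open_greaterThanLessThan)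
qed

lemma FF_props:
  assumes "continuous_on UNIV f"
  shows "continuous_on UNIV ((Aop x0 ^^ k) f) \<and>
         (\<forall>t. ((Aop x0 ^^ Suc k) f has_real_derivative (Aop x0 ^^ k) f t) (at t))"
proof (induction k)
  case 0
  then show ?case using assms oint_deriv[OF assms] by (simp add: Aop_def[abs_def])
next
  case (Suc k)
  then have c: "continuous_on UNIV ((Aop x0 ^^ Suc k) f)"
    by (meson DERIV_isCont continuous_at_imp_continuous_on)
  show ?case using c oint_deriv[OF c] by (simp add: Aop_def[abs_def])
qed

lemma pd_pow_sep:
  assumes "cls m d P" "continuous_on UNIV f"
  shows "(pderiv_at m ^^ k) (sep m P ((Aop x0 ^^ (j + k)) f)) = sep m P ((Aop x0 ^^ j) f)"
proof (induction k arbitrary: j)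
  case 0 then show ?case by simp
next
  case (Suc k)
  have "(pderiv_at m ^^ Suc k) (sep m P ((Aop x0 ^^ (j + Suc k)) f))
      = pderiv_at m (sep m P ((Aop x0 ^^ Suc j) f))"
    using Suc.IH[of "Suc j"] by simp
  also have "\<dots> = sep m P ((Aop x0 ^^ j) f)"
    by (rule pd_m_sep[OF assms(1)]) (use FF_props[OF assms(2)] in blast)
  finally show ?case .
qed


definition ss :: "'n \<Rightarrow> nat set \<Rightarrow> (nat \<Rightarrow> real^'n \<Rightarrow> real) \<Rightarrow> (nat \<Rightarrow> real \<Rightarrow> real) \<Rightarrow> real^'n \<Rightarrow> real" where
  "ss m S P G x = (\<Sum>p\<in>S. P p x * G p (x $ m))"

lemma ss_pd_other:
  assumes "\<And>p. p \<in> S \<Longrightarrow> cls m (dd p) (P p)" "i \<noteq> m"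
  shows "((\<lambda>s. ss m S P G (vupd x i s)) has_real_derivative ss m S (\<lambda>p. pderiv_at i (P p)) G (vupd x i t)) (at t)"
  unfolding ss_def using assms(2)
  by (auto intro!: DERIV_sum DERIV_cmult_right cls_pd(3)[OF assms(1)])

lemma ss_pd_m:
  assumes "\<And>p. p \<in> S \<Longrightarrow> cls m (dd p) (P p)" "\<And>p t. p \<in> S \<Longrightarrow> (G p has_real_derivative G' p t) (at t)"
  shows "((\<lambda>s. ss m S P G (vupd x m s)) has_real_derivative ss m S P G' (vupd x m t)) (at t)"
  unfolding ss_def
  by (auto intro!: DERIV_sum DERIV_cmult assms(2) simp: cls_indep[OF assms(1)])

lemma ss_pderiv_other:
  assumes "\<And>p. p \<in> S \<Longrightarrow> cls m (dd p) (P p)" "i \<noteq> m"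
  shows "pderiv_at i (ss m S P G) = ss m S (\<lambda>p. pderiv_at i (P p)) G"
  by (rule pderiv_eqI) (rule ss_pd_other[OF assms])

lemma ss_pderiv_m:
  assumes "\<And>p. p \<in> S \<Longrightarrow> cls m (dd p) (P p)" "\<And>p t. p \<in> S \<Longrightarrow> (G p has_real_derivative G' p t) (at t)"
  shows "pderiv_at m (ss m S P G) = ss m S P G'"
  by (rule pderiv_eqI) (rule ss_pd_m[OF assms])

lemma diffI: "(f has_real_derivative D) (at t) \<Longrightarrow> f differentiable (at t)"
  unfolding differentiable_def has_field_derivative_def by blast

lemma main:
  fixes q :: "real ^ 'n::finite \<Rightarrow> real" and f :: "real \<Rightarrow> real"
    and m :: 'n and \<beta> :: "'n \<Rightarrow> nat" and x0 :: real
  assumes fc: "continuous_on UNIV f"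
    and qf: "\<And>x. q x = f (x $ m) * (\<Prod>i\<in>UNIV - {m}. (x $ i) ^ \<beta> i)"
    and lamd: "deg m \<beta> < 2 * lam + 2"
  shows "let W = (antider x0 m ^^ (2 * lam + 2)) q;
             Q = (\<lambda>x. \<Sum>p = 0..lam. (-1) ^ p *
                    ((pderiv_at m ^^ (2 * lam - 2 * p)) ((lap_minus m ^^ p) W)) x)
         in (\<forall>x. Q x = (\<Sum>p = 0..lam. (-1) ^ p *
                    ((antider x0 m ^^ (2 + 2 * p)) ((lap_minus m ^^ p) q)) x))
          \<and> (\<forall>x i. (\<lambda>t. Q (vupd x i t)) differentiable (at (x $ i))
                \<and> (\<lambda>t. pderiv_at i Q (vupd x i t)) differentiable (at (x $ i)))
          \<and> (\<forall>x. laplacian Q x = q x)"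
proof -
  define W where "W = (antider x0 m ^^ (2 * lam + 2)) q"
  define Q where "Q = (\<lambda>x. \<Sum>p = 0..lam. (-1) ^ p *
                    ((pderiv_at m ^^ (2 * lam - 2 * p)) ((lap_minus m ^^ p) W)) x)"
  define B where "B = deg m \<beta>"
  define P0 where "P0 = (\<lambda>x. 1 * mnm m \<beta> x)"
  have cP0: "cls m B P0" unfolding P0_def B_def by (rule clsM) simp
  have q: "q = sep m P0 f" by (rule ext) (simp add: sep_def P0_def mnm_def qf)
  define Pp where "Pp p = (lap_minus m ^^ p) P0" for p
  define FF where "FF k = (Aop x0 ^^ k) f" for k
  have cPp: "cls m (B - 2*p) (Pp p)" for p using cls_lap_pow[OF cP0] unfolding Pp_def by blast
  have Pz: "Pp (Suc lam) = (\<lambda>x. 0)" using cls_lap_pow[OF cP0, of "Suc lam"] lamd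
    unfolding Pp_def B_def by simp
  have W: "W = sep m P0 (FF (2*lam+2))" unfolding W_def q FF_def by (rule antider_pow_sep[OF cP0])
  have termL: "(pderiv_at m ^^ (2*lam - 2*p)) ((lap_minus m ^^ p) W) = sep m (Pp p) (FF (2*p+2))"
    if "p \<le> lam" for p
  proof -
    have "(lap_minus m ^^ p) W = sep m (Pp p) (FF (2*p+2 + (2*lam - 2*p)))"
      unfolding W lap_pow_sep[OF cP0] Pp_def using that by simp
    then show ?thesis unfolding FF_def
      using pd_pow_sep[OF cPp[of p] fc, where k="2*lam - 2*p" and j="2*p+2"] by simp
  qed
  have termR: "(antider x0 m ^^ (2 + 2*p)) ((lap_minus m ^^ p) q) = sep m (Pp p) (FF (2*p+2))" for p
    unfolding q lap_pow_sep[OF cP0] antider_pow_sep[OF cPp[unfolded Pp_def]] Pp_def FF_def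
    by (simp add: add.commute)
  define S where "S = {0..lam}"
  define G where "G p t = (-1)^p * FF (2*p+2) t" for p t
  define G1 where "G1 p t = (-1)^p * FF (2*p+1) t" for p t
  define G2 where "G2 p t = (-1)^p * FF (2*p) t" for p t
  have c1: "\<forall>x. Q x = (\<Sum>p = 0..lam. (-1) ^ p *
                    ((antider x0 m ^^ (2 + 2 * p)) ((lap_minus m ^^ p) q)) x)"
    unfolding Q_def termR by (auto intro!: sum.cong simp: termL)
  have Qss: "Q = ss m S Pp G"
    unfolding Q_def by (rule ext) (auto intro!: sum.cong simp: termL S_def ss_def G_def sep_def)
  have cS: "\<And>p. p \<in> S \<Longrightarrow> cls m (B - 2*p) (Pp p)" using cPp by blast
  have dG: "(G p has_real_derivative G1 p t) (at t)" for p t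
    unfolding G_def G1_def FF_def using FF_props[OF fc, where k="2*p+1"]
    by (auto intro!: DERIV_cmult)
  have dG1: "(G1 p has_real_derivative G2 p t) (at t)" for p t
    unfolding G2_def G1_def FF_def using FF_props[OF fc, where k="2*p"]
    by (auto intro!: DERIV_cmult)
  have Qm: "pderiv_at m Q = ss m S Pp G1" unfolding Qss by (rule ss_pderiv_m[OF cS dG])
  have Qmm: "pderiv_at m (pderiv_at m Q) = ss m S Pp G2" unfolding Qm by (rule ss_pderiv_m[OF cS dG1])
  have cS1: "\<And>p. p \<in> S \<Longrightarrow> cls m (B - 2*p - 1) (pderiv_at i (Pp p))" for i
    using cls_pd(1)[OF cPp] by blast
  have Qi: "pderiv_at i Q = ss m S (\<lambda>p. pderiv_at i (Pp p)) G" if "i \<noteq> m" for i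
    unfolding Qss by (rule ss_pderiv_other[OF cS that])
  have Qii: "pderiv_at i (pderiv_at i Q) = ss m S (\<lambda>p. pderiv_at i (pderiv_at i (Pp p))) G" if "i \<noteq> m" for i
    unfolding Qi[OF that] by (rule ss_pderiv_other[OF cS1 that])
  have c2: "\<forall>x i. (\<lambda>t. Q (vupd x i t)) differentiable (at (x $ i))
                \<and> (\<lambda>t. pderiv_at i Q (vupd x i t)) differentiable (at (x $ i))"
  proof (intro allI)
    fix x i
    show "(\<lambda>t. Q (vupd x i t)) differentiable (at (x $ i))
                \<and> (\<lambda>t. pderiv_at i Q (vupd x i t)) differentiable (at (x $ i))"
    proof (cases "i = m")
      case True
      show ?thesis unfolding True Qm unfolding Qss
        by (intro conjI diffI[OF ss_pd_m[OF cS dG]] diffI[OF ss_pd_m[OF cS dG1]])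
    next
      case False
      show ?thesis unfolding Qi[OF False] unfolding Qss
        by (intro conjI diffI[OF ss_pd_other[OF cS False]] diffI[OF ss_pd_other[OF cS1 False]])
    qed
  qed
  have c3: "laplacian Q x = q x" for x
  proof -
    have "laplacian Q x = pderiv_at m (pderiv_at m Q) x + (\<Sum>i\<in>UNIV - {m}. pderiv_at i (pderiv_at i Q) x)"
      unfolding laplacian_def by (subst sum.remove[of _ m]) auto
    also have "(\<Sum>i\<in>UNIV - {m}. pderiv_at i (pderiv_at i Q) x)
        = (\<Sum>i\<in>UNIV - {m}. \<Sum>p\<in>S. pderiv_at i (pderiv_at i (Pp p)) x * G p (x $ m))"
      by (intro sum.cong) (auto simp: Qii ss_def)
    also have "\<dots> = (\<Sum>p\<in>S. lap_minus m (Pp p) x * G p (x $ m))"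
      by (simp add: lap_minus_def sum_distrib_right) (rule sum.swap)
    also have "\<dots> = (\<Sum>p\<in>S. Pp (Suc p) x * G p (x $ m))"
      by (simp add: Pp_def)
    finally have L: "laplacian Q x = ss m S Pp G2 x + (\<Sum>p\<in>S. Pp (Suc p) x * G p (x $ m))"
      unfolding Qmm .
    define b where "b p = (-1)^p * Pp p x * FF (2*p) (x $ m)" for p
    have e1: "ss m S Pp G2 x = (\<Sum>p\<le>lam. b p)" unfolding ss_def S_def atLeast0AtMost b_def G2_def
      by (intro sum.cong refl) (simp add: algebra_simps)
    have e2: "(\<Sum>p\<in>S. Pp (Suc p) x * G p (x $ m)) = (\<Sum>p\<le>lam. - b (Suc p))"
      unfolding S_def atLeast0AtMost b_def G_def
      by (intro sum.cong refl) (simp add: algebra_simps)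
    have "laplacian Q x = (\<Sum>p\<le>lam. b p - b (Suc p))"
      unfolding L e1 e2 by (simp add: sum_subtractf sum_negf)
    also have "\<dots> = b 0 - b (Suc lam)" by (rule sum_telescope)
    also have "\<dots> = q x" using Pz by (simp add: b_def) (simp add: Pp_def FF_def q sep_def)
    finally show ?thesis .
  qed
  have all: "(\<forall>x. Q x = (\<Sum>p = 0..lam. (-1) ^ p *
                    ((antider x0 m ^^ (2 + 2 * p)) ((lap_minus m ^^ p) q)) x))
          \<and> (\<forall>x i. (\<lambda>t. Q (vupd x i t)) differentiable (at (x $ i))
                \<and> (\<lambda>t. pderiv_at i Q (vupd x i t)) differentiable (at (x $ i)))
          \<and> (\<forall>x. laplacian Q x = q x)" using c1 c2 c3 by blast
  show ?thesis unfolding Let_def using all[unfolded Q_def W_def] .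
qed


theorem corollary5p2:
  fixes q :: "real ^ 'n::finite \<Rightarrow> real" and f :: "real \<Rightarrow> real"
    and m :: 'n and \<beta> :: "'n \<Rightarrow> nat" and x0 :: real
  assumes C1: "\<exists>D. (\<forall>x. (q has_derivative blinfun_apply (D x)) (at x)) \<and> continuous_on UNIV D"
    and q_form: "\<And>x. q x = f (x $ m) * (\<Prod>i\<in>UNIV - {m}. (x $ i) ^ \<beta> i)"
  shows "let lam = nat \<lceil>(real (\<Sum>i\<in>UNIV - {m}. \<beta> i) - 1) / 2\<rceil>;
             W = (antider x0 m ^^ (2 * lam + 2)) q;
             Q = (\<lambda>x. \<Sum>p = 0..lam. (-1) ^ p *
                    ((pderiv_at m ^^ (2 * lam - 2 * p)) ((lap_minus m ^^ p) W)) x)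
         in (\<forall>x. Q x = (\<Sum>p = 0..lam. (-1) ^ p *
                    ((antider x0 m ^^ (2 + 2 * p)) ((lap_minus m ^^ p) q)) x))
          \<and> (\<forall>x i. (\<lambda>t. Q (vupd x i t)) differentiable (at (x $ i))
                \<and> (\<lambda>t. pderiv_at i Q (vupd x i t)) differentiable (at (x $ i)))
          \<and> (\<forall>x. laplacian Q x = q x)"
proof -
  obtain D where D: "\<forall>x. (q has_derivative blinfun_apply (D x)) (at x)" using C1 by blast
  have qc: "continuous_on UNIV q"
    using D has_derivative_continuous continuous_at_imp_continuous_on by blast
  define c :: "real^'n" where "c = (\<chi> i. 1)"
  have fe: "f t = q (vupd c m t)" for t using q_form[of "vupd c m t"] by (simp add: c_def)
  have vc: "continuous_on UNIV (\<lambda>t. vupd c m t)" unfolding vupd_def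
  proof (intro continuous_on_vec_lambda)
    fix k show "continuous_on UNIV (\<lambda>t. if k = m then t else c $ k)"
      by (cases "k = m") auto
  qed
  have "continuous_on UNIV (q \<circ> (\<lambda>t. vupd c m t))"
    by (rule continuous_on_compose[OF vc continuous_on_subset[OF qc]]) auto
  moreover have "q \<circ> (\<lambda>t. vupd c m t) = f" using fe by (auto simp: o_def)
  ultimately have fc: "continuous_on UNIV f" by simp
  define B where "B = (\<Sum>i\<in>UNIV - {m}. \<beta> i)"
  define lam where "lam = nat \<lceil>(real B - 1) / 2\<rceil>"
  have z: "real_of_int z \<le> real (nat z)" for z :: int by (cases "z \<ge> 0") auto
  have "(real B - 1) / 2 \<le> real lam" unfolding lam_def
    using le_of_int_ceiling[of "(real B - 1) / 2"] z[of "\<lceil>(real B - 1) / 2\<rceil>"] by linarith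
  then have "real B < real (2 * lam + 2)" by simp
  then have lamd: "deg m \<beta> < 2 * lam + 2" unfolding deg_def B_def[symmetric] by (simp only: of_nat_less_iff)
  show ?thesis unfolding Let_def using main[OF fc q_form lamd, unfolded Let_def] unfolding lam_def B_def .
qed

end
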